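(* Let $g\ge 2$, $n\ge 2$, let $(t_1,\ldots,t_n)$ be a generic $n$-tuple of elements of $T$, let $l\neq m$ be elements of $\{1,\ldots,n\}$, let $A$ be a subset of $\{a_1,\ldots,a_g,b_1,\ldots,b_g\}\cup\{c_j \mid j\in\{1,\ldots,n\}\setminus\{l,m\}\}$, and let $(i,j,k)$ and $(u,v,w)$ be permutations of $(1,2,3)$. Then the collection of sections $$\{s^l_{ij}(x), s^l_{ik}(x) \mid x\in A\}\cup\{s^l_{u,j}(c_m), s^l_{u,k}(c_m)\}$$ has the same common vanishing locus in $S_g(t_1,\ldots,t_n)$ as the collection $$\{s^m_{uv}(x), s^m_{uw}(x)\mid x\in A\}\cup\{s^m_{i,v}(c_l), s^m_{i,w}(c_l)\}.$$
   Context: Let $\Sigma$ be a compact Riemann surface of genus $g$, $p_1,\ldots,p_n\in\Sigma$ distinct points, and fix the presentation $\pi_1(\Sigma\setminus\{p_1,\ldots,p_n\}) = \langle a_1,\ldots,a_g,b_1,\ldots,b_g,c_1,\ldots,c_n \mid \prod_{i=1}^g[a_i,b_i]=\prod_{j=1}^n c_j\rangle$. Let $G=SU(3)$, $T\subset G$ the diagonal maximal torus. An $n$-tuple $(t_1,\ldots,t_n)$ in $T$ is generic if each $t_j$ has centralizer $T$ in $G$ and no product $\lambda_1\cdots\lambda_n$ with $\lambda_i$ an eigenvalue of $t_i$ equals $1$. Let $S_g(t_1,\ldots,t_n) := \{\rho\in\mathrm{Hom}(\pi_1(\Sigma\setminus\{p_1,\ldots,p_n\}),G)\mid\rho(c_i)\sim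 t_i\ \forall i\}/G$ (conjugation quotient), and $V^l_g(t_1,\ldots,t_n):=\{\rho\mid\rho(c_l)=t_l,\ \rho(c_i)\sim t_i\ \forall i\}$, a $T$-bundle over $S_g(t_1,\ldots,t_n)$ under conjugation. For $1\le j,k\le 3$ let $\mathbb{C}_{(jk)}$ (resp. $\mathbb{C}_{(j)}$) be the representation of $T$ in which $\mathrm{diag}(e^{i\theta_1},e^{i\theta_2},e^{i\theta_3})$ acts by $e^{i(\theta_j-\theta_k)}$ (resp. $e^{i\theta_j}$), and $L^l_{jk}$ (resp. $L^l_j$) the associated line bundle $(V^l_g(t_1,\ldots,t_n)\times\mathbb{C}_{(jk)})/T$ (resp. with $\mathbb{C}_{(j)}$). Two kinds of sections are used (note the comma distinguishing them). (i) For a generator $x\in\{a_1,\ldots,a_g,b_1,\ldots,b_g,c_1,\ldots,c_n\}\setminus\{c_l\}$, $s^l_{jk}(x)$ is the section of $L^l_{jk}$ induced by the $T$-equivariant map $V^l_g(t_1,\ldots,t_n)\to\mathbb{C}_{(jk)}$, $\rho\mapsto(\rho(x))_{jk}$ (the $(j,k)$ matrix entry); it vanishes at $[\rho]$ iff $(\rho(x))_{jk}=0$ for a representative $\rho\in V^l_g(t_1,\ldots,t_n)$. (ii) For $c_{i'}$ with $i'\neq l$, $s^l_{j,k}(c_{i'})$ is a section of $L^l_j$ defined via a matrix $A\in SU(3)$ with $A\rho(c_{i'})A^{-1}=t_{i'}$ (for a representative $\rho\in V^l_g(t_1,\ldots,t_n)$; $A$ is unique up to left multiplication by $T$), taking value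 given by the entry $A_{jk}$; it vanishes at $[\rho]$ iff $A_{jk}=0$, equivalently iff the $k$-th coordinate of an eigenvector of $\rho(c_{i'})$ with eigenvalue $(t_{i'})_{jj}$ is zero. *)

theory Defs
  imports "HOL-Analysis.Analysis"
begin

type_synonym mat3 = "complex^3^3"

definition ctrans :: "mat3 \<Rightarrow> mat3" where
  "ctrans M = (\<chi> r s. cnj (M $ s $ r))"

definition SU3 :: "mat3 set" where
  "SU3 = {U. U ** ctrans U = mat 1 \<and> det U = 1}"

definition torus :: "mat3 set" where
  "torus = {M \<in> SU3. \<forall>r s. r \<noteq> s \<longrightarrow> M $ r $ s = 0}"

definition centralizer :: "mat3 \<Rightarrow> mat3 set" where
  "centralizer M = {U \<in> SU3. U ** M = M ** U}"

definition is_eigenvalue :: "mat3 \<Rightarrow> complex \<Rightarrow> bool" where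
  "is_eigenvalue M ev \<longleftrightarrow> (\<exists>v. v \<noteq> 0 \<and> M *v v = ev *s v)"

definition generic :: "nat \<Rightarrow> (nat \<Rightarrow> mat3) \<Rightarrow> bool" where
  "generic n t \<longleftrightarrow>
     (\<forall>j\<in>{1..n}. t j \<in> torus \<and> centralizer (t j) = torus) \<and>
     (\<forall>ev. (\<forall>j\<in>{1..n}. is_eigenvalue (t j) (ev j)) \<longrightarrow> (\<Prod>j\<in>{1..n}. ev j) \<noteq> 1)"

text \<open>Generators of the fundamental group of the punctured surface.\<close>
datatype gen = GA nat | GB nat | GC nat

definition gens :: "nat \<Rightarrow> nat \<Rightarrow> gen set" where
  "gens g n = GA ` {1..g} \<union> GB ` {1..g} \<union> GC ` {1..n}"

definition mprod :: "mat3 list \<Rightarrow> mat3" where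
  "mprod Ms = foldr (\<lambda>M N. M ** N) Ms (mat 1)"

definition commutator :: "mat3 \<Rightarrow> mat3 \<Rightarrow> mat3" where
  "commutator X Y = X ** Y ** ctrans X ** ctrans Y"

text \<open>Hom(pi_1, SU(3)): assignments of SU(3) elements to the generators satisfying
  prod_i [a_i,b_i] = prod_j c_j (products ordered left to right); values on
  non-generators are normalised to the identity.\<close>
definition Hom :: "nat \<Rightarrow> nat \<Rightarrow> (gen \<Rightarrow> mat3) set" where
  "Hom g n = {\<rho>. (\<forall>x\<in>gens g n. \<rho> x \<in> SU3) \<and> (\<forall>x. x \<notin> gens g n \<longrightarrow> \<rho> x = mat 1) \<and>
     mprod (map (\<lambda>i. commutator (\<rho> (GA i)) (\<rho> (GB i))) [1..<g+1])
       = mprod (map (\<lambda>j. \<rho> (GC j)) [1..<n+1])}"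

definition conj_rel :: "mat3 \<Rightarrow> mat3 \<Rightarrow> bool" (infix "\<sim>\<^sub>G" 50) where
  "X \<sim>\<^sub>G Y \<longleftrightarrow> (\<exists>P\<in>SU3. X = P ** Y ** ctrans P)"

definition Hom_t :: "nat \<Rightarrow> nat \<Rightarrow> (nat \<Rightarrow> mat3) \<Rightarrow> (gen \<Rightarrow> mat3) set" where
  "Hom_t g n t = {\<rho> \<in> Hom g n. \<forall>i\<in>{1..n}. \<rho> (GC i) \<sim>\<^sub>G t i}"

definition conj_act :: "mat3 \<Rightarrow> (gen \<Rightarrow> mat3) \<Rightarrow> (gen \<Rightarrow> mat3)" where
  "conj_act P \<rho> = (\<lambda>x. P ** \<rho> x ** ctrans P)"

definition orbit :: "(gen \<Rightarrow> mat3) \<Rightarrow> (gen \<Rightarrow> mat3) set" where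
  "orbit \<rho> = {conj_act P \<rho> | P. P \<in> SU3}"

definition S :: "nat \<Rightarrow> nat \<Rightarrow> (nat \<Rightarrow> mat3) \<Rightarrow> (gen \<Rightarrow> mat3) set set" where
  "S g n t = orbit ` Hom_t g n t"

definition V :: "nat \<Rightarrow> nat \<Rightarrow> (nat \<Rightarrow> mat3) \<Rightarrow> nat \<Rightarrow> (gen \<Rightarrow> mat3) set" where
  "V g n t l = {\<rho> \<in> Hom_t g n t. \<rho> (GC l) = t l}"

text \<open>Vanishing of s^l_{jk}(x) at the class Q.\<close>
definition vanish_entry ::
  "nat \<Rightarrow> nat \<Rightarrow> (nat \<Rightarrow> mat3) \<Rightarrow> nat \<Rightarrow> 3 \<Rightarrow> 3 \<Rightarrow> gen \<Rightarrow> (gen \<Rightarrow> mat3) set \<Rightarrow> bool" where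
  "vanish_entry g n t l j k x Q \<longleftrightarrow> (\<exists>\<rho>\<in>Q \<inter> V g n t l. \<rho> x $ j $ k = 0)"

text \<open>Vanishing of s^l_{j,k}(c_{i'}) at the class Q.\<close>
definition vanish_eig ::
  "nat \<Rightarrow> nat \<Rightarrow> (nat \<Rightarrow> mat3) \<Rightarrow> nat \<Rightarrow> 3 \<Rightarrow> 3 \<Rightarrow> nat \<Rightarrow> (gen \<Rightarrow> mat3) set \<Rightarrow> bool" where
  "vanish_eig g n t l j k i' Q \<longleftrightarrow>
     (\<exists>\<rho>\<in>Q \<inter> V g n t l. \<exists>A\<in>SU3. A ** \<rho> (GC i') ** ctrans A = t i' \<and> A $ j $ k = 0)"

end

theory Submission
  imports Defs
begin

lemma ctrans_ctrans[simp]: "ctrans (ctrans A) = A"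
  by (simp add: ctrans_def vec_eq_iff)

lemma ctrans_mult: "ctrans (A ** B) = ctrans B ** ctrans A"
  by (simp add: ctrans_def vec_eq_iff matrix_matrix_mult_def mult.commute)

lemma ctrans_mat1[simp]: "ctrans (mat 1) = mat 1"
  by (simp add: ctrans_def vec_eq_iff mat_def)

lemma SU3_rinv: "P \<in> SU3 \<Longrightarrow> P ** ctrans P = mat 1"
  by (simp add: SU3_def)

lemma SU3_linv: "P \<in> SU3 \<Longrightarrow> ctrans P ** P = mat 1"
  by (simp add: SU3_def matrix_left_right_inverse)

lemma SU3_mult: assumes "P \<in> SU3" "R \<in> SU3" shows "P ** R \<in> SU3"
proof -
  have "P ** R ** ctrans (P ** R) = P ** (R ** ctrans R) ** ctrans P"
    by (simp add: ctrans_mult matrix_mul_assoc)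
  also have "\<dots> = mat 1" using assms by (simp add: SU3_rinv)
  finally show ?thesis using assms by (simp add: SU3_def det_mul)
qed

lemma SU3_ctrans: assumes "P \<in> SU3" shows "ctrans P \<in> SU3"
proof -
  have "det P * det (ctrans P) = 1" using assms det_mul[of P "ctrans P"]
    by (simp add: SU3_def)
  then have "det (ctrans P) = 1" using assms by (simp add: SU3_def)
  then show ?thesis using SU3_linv[OF assms] by (simp add: SU3_def)
qed

lemma conj_act_comp: "conj_act P (conj_act R \<rho>) = conj_act (P ** R) \<rho>"
  by (simp add: conj_act_def ctrans_mult matrix_mul_assoc)

lemma conj_mat1: "P \<in> SU3 \<Longrightarrow> P ** mat 1 ** ctrans P = mat 1"
  by (simp add: SU3_rinv)

lemma mprod_conj:
  assumes "P \<in> SU3"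
  shows "mprod (map (\<lambda>x. P ** f x ** ctrans P) xs) = P ** mprod (map f xs) ** ctrans P"
proof (induction xs)
  case Nil
  then show ?case using assms by (simp add: mprod_def SU3_rinv)
next
  case (Cons a xs)
  have "mprod (map (\<lambda>x. P ** f x ** ctrans P) (a # xs))
      = P ** f a ** ctrans P ** (P ** mprod (map f xs) ** ctrans P)"
    using Cons by (simp add: mprod_def)
  also have "\<dots> = P ** f a ** (ctrans P ** P) ** mprod (map f xs) ** ctrans P"
    by (simp add: matrix_mul_assoc)
  also have "\<dots> = P ** mprod (map f (a # xs)) ** ctrans P"
    using assms by (simp add: SU3_linv mprod_def matrix_mul_assoc)
  finally show ?case .
qed

lemma commutator_conj:
  assumes "P \<in> SU3"
  shows "commutator (P ** X ** ctrans P) (P ** Y ** ctrans P) = P ** commutator X Y ** ctrans P"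
proof -
  have L: "ctrans P ** P = mat 1" using assms by (rule SU3_linv)
  have "commutator (P ** X ** ctrans P) (P ** Y ** ctrans P)
     = P ** X ** (ctrans P ** P) ** Y ** (ctrans P ** P) ** ctrans X ** (ctrans P ** P) ** ctrans Y ** ctrans P"
    by (simp add: commutator_def ctrans_mult matrix_mul_assoc)
  also have "\<dots> = P ** commutator X Y ** ctrans P"
    by (simp add: L commutator_def matrix_mul_assoc)
  finally show ?thesis .
qed

lemma conj_rel_conj:
  assumes "P \<in> SU3" "X \<sim>\<^sub>G Y" shows "P ** X ** ctrans P \<sim>\<^sub>G Y"
proof -
  obtain R where R: "R \<in> SU3" "X = R ** Y ** ctrans R" using assms(2) by (auto simp: conj_rel_def)
  have "P ** X ** ctrans P = (P ** R) ** Y ** ctrans (P ** R)"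
    by (simp add: R ctrans_mult matrix_mul_assoc)
  then show ?thesis using SU3_mult[OF assms(1) R(1)] by (auto simp: conj_rel_def)
qed

lemma Hom_t_conj:
  assumes "\<rho> \<in> Hom_t g n t" "P \<in> SU3"
  shows "conj_act P \<rho> \<in> Hom_t g n t"
proof -
  have h: "\<rho> \<in> Hom g n" and c: "\<forall>i\<in>{1..n}. \<rho> (GC i) \<sim>\<^sub>G t i" using assms by (auto simp: Hom_t_def)
  have 1: "\<forall>x\<in>gens g n. conj_act P \<rho> x \<in> SU3"
    using h assms(2) by (auto simp: Hom_def conj_act_def intro!: SU3_mult SU3_ctrans)
  have 2: "\<forall>x. x \<notin> gens g n \<longrightarrow> conj_act P \<rho> x = mat 1"
    using h assms(2) by (auto simp: Hom_def conj_act_def SU3_rinv)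
  have 3: "mprod (map (\<lambda>i. commutator (conj_act P \<rho> (GA i)) (conj_act P \<rho> (GB i))) [1..<g+1])
       = mprod (map (\<lambda>j. conj_act P \<rho> (GC j)) [1..<n+1])"
    using h assms(2)
    by (simp add: conj_act_def commutator_conj mprod_conj[where f="\<lambda>i. commutator (\<rho> (GA i)) (\<rho> (GB i))"]
        mprod_conj[where f="\<lambda>j. \<rho> (GC j)"] Hom_def)
  have 4: "\<forall>i\<in>{1..n}. conj_act P \<rho> (GC i) \<sim>\<^sub>G t i"
    using c assms(2) by (simp add: conj_act_def conj_rel_conj)
  show ?thesis using 1 2 3 4 by (simp add: Hom_t_def Hom_def)
qed

definition diagm :: "mat3 \<Rightarrow> bool" where
  "diagm D \<longleftrightarrow> (\<forall>r s. r \<noteq> s \<longrightarrow> D $ r $ s = 0)"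

lemma torus_diagm: "D \<in> torus \<Longrightarrow> diagm D"
  by (simp add: torus_def diagm_def)

lemma diagm_ctrans: "diagm D \<Longrightarrow> diagm (ctrans D)"
  by (simp add: diagm_def ctrans_def)

lemma diag_lmult: assumes "diagm D" shows "(D ** M) $ a $ b = D $ a $ a * M $ a $ b"
proof -
  have "(D ** M) $ a $ b = (\<Sum>r\<in>UNIV. D $ a $ r * M $ r $ b)"
    by (simp add: matrix_matrix_mult_def)
  also have "\<dots> = (\<Sum>r\<in>UNIV. if r = a then D $ a $ a * M $ a $ b else 0)"
    using assms by (intro sum.cong) (auto simp: diagm_def)
  finally have "(D ** M) $ a $ b = (\<Sum>r\<in>UNIV. if r = a then D $ a $ a * M $ a $ b else 0)" .
  then show ?thesis by simp
qed

lemma diag_rmult: assumes "diagm D" shows "(M ** D) $ a $ b = M $ a $ b * D $ b $ b"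
proof -
  have "(M ** D) $ a $ b = (\<Sum>r\<in>UNIV. M $ a $ r * D $ r $ b)"
    by (simp add: matrix_matrix_mult_def)
  also have "\<dots> = (\<Sum>r\<in>UNIV. if r = b then M $ a $ b * D $ b $ b else 0)"
    using assms by (intro sum.cong) (auto simp: diagm_def)
  finally have "(M ** D) $ a $ b = (\<Sum>r\<in>UNIV. if r = b then M $ a $ b * D $ b $ b else 0)" .
  then show ?thesis by simp
qed

lemma diag_conj: assumes "diagm D"
  shows "(D ** M ** ctrans D) $ a $ b = D $ a $ a * M $ a $ b * cnj (D $ b $ b)"
  using diagm_ctrans[OF assms] assms by (simp add: diag_rmult diag_lmult ctrans_def)

lemma V_unique:
  assumes gen: "generic n t" and l: "l \<in> {1..n}" and Q: "Q \<in> S g n t"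
    and r1: "\<rho>1 \<in> Q \<inter> V g n t l" and r2: "\<rho>2 \<in> Q \<inter> V g n t l"
  shows "\<exists>D\<in>torus. \<rho>1 = conj_act D \<rho>2"
proof -
  obtain \<rho>0 where Q0: "Q = orbit \<rho>0" using Q by (auto simp: S_def)
  obtain P1 where P1: "P1 \<in> SU3" "\<rho>1 = conj_act P1 \<rho>0" using r1 Q0 by (auto simp: orbit_def)
  obtain P2 where P2: "P2 \<in> SU3" "\<rho>2 = conj_act P2 \<rho>0" using r2 Q0 by (auto simp: orbit_def)
  define D where "D = P1 ** ctrans P2"
  have DS: "D \<in> SU3" unfolding D_def using P1 P2 by (simp add: SU3_mult SU3_ctrans)
  have eq: "\<rho>1 = conj_act D \<rho>2"
    by (simp add: P1 P2 conj_act_comp D_def matrix_mul_assoc[symmetric] SU3_linv)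
  have t1: "\<rho>1 (GC l) = t l" and t2: "\<rho>2 (GC l) = t l" using r1 r2 by (auto simp: V_def)
  have "t l = D ** t l ** ctrans D" using eq t1 t2 by (metis conj_act_def)
  then have "t l ** D = D ** t l ** (ctrans D ** D)" by (metis matrix_mul_assoc)
  then have "t l ** D = D ** t l" using SU3_linv[OF DS] by simp
  then have "D \<in> centralizer (t l)" using DS by (simp add: centralizer_def)
  then have "D \<in> torus" using gen l by (simp add: generic_def)
  then show ?thesis using eq by blast
qed

lemma entry_transfer:
  assumes "D \<in> torus" "\<rho>1 = conj_act D \<rho>2" "\<rho>2 x $ a $ b = 0"
  shows "\<rho>1 x $ a $ b = 0"
  using assms torus_diagm[OF assms(1)] by (simp add: conj_act_def diag_conj)

lemma eig_transfer:
  assumes D: "D \<in> torus" and eq: "\<rho>2 = conj_act D \<rho>1" and A2: "A2 \<in> SU3"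
    and h: "A2 ** \<rho>2 c ** ctrans A2 = T" and z: "A2 $ a $ b = 0"
  shows "\<exists>A\<in>SU3. A ** \<rho>1 c ** ctrans A = T \<and> A $ a $ b = 0"
proof (intro bexI conjI)
  have DS: "D \<in> SU3" using D by (simp add: torus_def)
  show "A2 ** D \<in> SU3" using A2 DS by (rule SU3_mult)
  show "A2 ** D ** \<rho>1 c ** ctrans (A2 ** D) = T"
    using h eq by (simp add: conj_act_def ctrans_mult matrix_mul_assoc)
  show "(A2 ** D) $ a $ b = 0" using z torus_diagm[OF D] by (simp add: diag_rmult)
qed

lemma eig_unique:
  assumes B: "B \<in> SU3" and B': "B' \<in> SU3" and h1: "B ** X ** ctrans B = T"
    and h2: "B' ** X ** ctrans B' = T" and cT: "centralizer T = torus" and z: "B' $ a $ b = 0"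
  shows "B $ a $ b = 0"
proof -
  define E where "E = B ** ctrans B'"
  have ES: "E \<in> SU3" unfolding E_def using B B' by (simp add: SU3_mult SU3_ctrans)
  have "E ** T = B ** (ctrans B' ** B') ** X ** ctrans B'"
    unfolding E_def h2[symmetric] by (simp add: matrix_mul_assoc)
  also have "\<dots> = B ** X ** ctrans B'" using SU3_linv[OF B'] by simp
  finally have 1: "E ** T = B ** X ** ctrans B'" .
  have "T ** E = B ** X ** (ctrans B ** B) ** ctrans B'"
    unfolding E_def h1[symmetric] by (simp add: matrix_mul_assoc)
  also have "\<dots> = B ** X ** ctrans B'" using SU3_linv[OF B] by simp
  finally have "T ** E = E ** T" using 1 by simp
  then have "E \<in> centralizer T" using ES by (simp add: centralizer_def)
  then have "E \<in> torus" using cT by simp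
  then have dE: "diagm E" by (rule torus_diagm)
  have "E ** B' = B ** (ctrans B' ** B')" unfolding E_def by (simp add: matrix_mul_assoc)
  then have "E ** B' = B" using SU3_linv[OF B'] by simp
  then have "B $ a $ b = E $ a $ a * B' $ a $ b" using diag_lmult[OF dE] by metis
  then show ?thesis using z by simp
qed

lemma univ3: assumes "distinct [i, j, k::3]" shows "(UNIV::3 set) = {i, j, k}"
  using assms exhaust_3 by (smt (verit) UNIV_eq_I distinct_length_2_or_more
      distinct_singleton insertCI)

lemma sum3: assumes "distinct [i, j, k::3]" shows "sum f (UNIV::3 set) = f i + f j + f k"
  using assms by (simp add: univ3[OF assms] add.assoc)

lemma row_key:
  assumes B: "B \<in> SU3" and d: "distinct [i, j, k::3]" and zj: "B $ u $ j = 0" and zk: "B $ u $ k = 0"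
  shows "B $ u $ i \<noteq> 0" and "v \<noteq> u \<Longrightarrow> B $ v $ i = 0"
proof -
  have e: "(B ** ctrans B) $ u $ v' = B $ u $ i * cnj (B $ v' $ i)" for v'
    by (simp add: matrix_matrix_mult_def ctrans_def sum3[OF d] zj zk)
  have "(B ** ctrans B) $ u $ u = 1" using SU3_rinv[OF B] by (simp add: mat_def)
  then show nz: "B $ u $ i \<noteq> 0" using e[of u] by auto
  assume "v \<noteq> u"
  then have "(B ** ctrans B) $ u $ v = 0" using SU3_rinv[OF B] by (simp add: mat_def)
  then show "B $ v $ i = 0" using e[of v] nz by simp
qed

lemma conj_key:
  assumes B: "B \<in> SU3" and d: "distinct [i, j, k::3]" and zj: "B $ u $ j = 0" and zk: "B $ u $ k = 0"
    and mj: "M $ i $ j = 0" and mk: "M $ i $ k = 0" and v: "v \<noteq> u"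
  shows "(B ** M ** ctrans B) $ u $ v = 0"
proof -
  have bm: "(B ** M) $ u $ s = B $ u $ i * M $ i $ s" for s
    by (simp add: matrix_matrix_mult_def sum3[OF d] zj zk)
  have "(B ** M ** ctrans B) $ u $ v = (B ** M) $ u $ i * cnj (B $ v $ i)"
    by (simp add: matrix_matrix_mult_def[of "B ** M"] ctrans_def sum3[OF d] bm mj mk)
  then show ?thesis using row_key(2)[OF B d zj zk v] by simp
qed

lemma main_dir:
  assumes gen: "generic n t" and l: "l \<in> {1..n}" and m: "m \<in> {1..n}"
    and d: "distinct [i, j, k::3]" and uv: "u \<noteq> v" and uw: "u \<noteq> w"
    and Q: "Q \<in> S g n t"
    and hA: "\<forall>x\<in>A. vanish_entry g n t l i j x Q \<and> vanish_entry g n t l i k x Q"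
    and e1: "vanish_eig g n t l u j m Q" and e2: "vanish_eig g n t l u k m Q"
  shows "(\<forall>x\<in>A. vanish_entry g n t m u v x Q \<and> vanish_entry g n t m u w x Q)
     \<and> vanish_eig g n t m i v l Q \<and> vanish_eig g n t m i w l Q"
proof -
  have cm: "centralizer (t m) = torus" using gen m by (simp add: generic_def)
  obtain \<rho> B where r: "\<rho> \<in> Q \<inter> V g n t l" and B: "B \<in> SU3"
    and hB: "B ** \<rho> (GC m) ** ctrans B = t m" and zj: "B $ u $ j = 0"
    using e1 by (auto simp: vanish_eig_def)
  obtain \<rho>2 B2 where r2: "\<rho>2 \<in> Q \<inter> V g n t l" and B2: "B2 \<in> SU3"
    and hB2: "B2 ** \<rho>2 (GC m) ** ctrans B2 = t m" and zk2: "B2 $ u $ k = 0"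
    using e2 by (auto simp: vanish_eig_def)
  obtain D where D: "D \<in> torus" "\<rho>2 = conj_act D \<rho>"
    using V_unique[OF gen l Q r2 r] by blast
  obtain B3 where B3: "B3 \<in> SU3" "B3 ** \<rho> (GC m) ** ctrans B3 = t m" "B3 $ u $ k = 0"
    using eig_transfer[OF D B2 hB2 zk2] by blast
  have zk: "B $ u $ k = 0" using eig_unique[OF B B3(1) hB B3(2) cm B3(3)] .
  have hx: "\<rho> x $ i $ j = 0 \<and> \<rho> x $ i $ k = 0" if x: "x \<in> A" for x
  proof -
    obtain \<rho>a where ra: "\<rho>a \<in> Q \<inter> V g n t l" "\<rho>a x $ i $ j = 0"
      using hA x by (auto simp: vanish_entry_def)
    obtain \<rho>b where rb: "\<rho>b \<in> Q \<inter> V g n t l" "\<rho>b x $ i $ k = 0"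
      using hA x by (auto simp: vanish_entry_def)
    obtain Da where "Da \<in> torus" "\<rho> = conj_act Da \<rho>a"
      using V_unique[OF gen l Q r ra(1)] by blast
    then have 1: "\<rho> x $ i $ j = 0" using entry_transfer ra(2) by blast
    obtain Db where "Db \<in> torus" "\<rho> = conj_act Db \<rho>b"
      using V_unique[OF gen l Q r rb(1)] by blast
    then have 2: "\<rho> x $ i $ k = 0" using entry_transfer rb(2) by blast
    show ?thesis using 1 2 by simp
  qed
  define \<rho>' where "\<rho>' = conj_act B \<rho>"
  obtain \<rho>0 where Q0: "Q = orbit \<rho>0" using Q by (auto simp: S_def)
  obtain P where P: "P \<in> SU3" "\<rho> = conj_act P \<rho>0" using r Q0 by (auto simp: orbit_def)
  have inQ: "\<rho>' \<in> Q" unfolding \<rho>'_def Q0 orbit_def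
    using P SU3_mult[OF B P(1)] by (auto simp: conj_act_comp)
  have inH: "\<rho>' \<in> Hom_t g n t" unfolding \<rho>'_def
    using r B by (intro Hom_t_conj) (auto simp: V_def)
  have inV: "\<rho>' \<in> Q \<inter> V g n t m" using inQ inH hB by (simp add: V_def \<rho>'_def conj_act_def)
  have ent: "\<rho>' x $ u $ v' = 0" if "x \<in> A" "v' \<noteq> u" for x v'
    unfolding \<rho>'_def conj_act_def
    using conj_key[OF B d zj zk] hx[OF that(1)] that(2) by blast
  have tl: "\<rho> (GC l) = t l" using r by (simp add: V_def)
  have eig: "ctrans B ** \<rho>' (GC l) ** ctrans (ctrans B) = t l"
  proof -
    have "ctrans B ** \<rho>' (GC l) ** ctrans (ctrans B) = (ctrans B ** B) ** t l ** (ctrans B ** B)"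
      by (simp add: \<rho>'_def conj_act_def tl matrix_mul_assoc)
    then show ?thesis using SU3_linv[OF B] by simp
  qed
  have cz: "ctrans B $ i $ v' = 0" if "v' \<noteq> u" for v'
    using row_key(2)[OF B d zj zk that] by (simp add: ctrans_def)
  have "vanish_eig g n t m i v' l Q" if "v' \<noteq> u" for v'
    unfolding vanish_eig_def
    using inV SU3_ctrans[OF B] eig cz[OF that] by blast
  moreover have "v \<noteq> u" "w \<noteq> u" using uv uw by auto
  ultimately show ?thesis using ent inV unfolding vanish_entry_def by blast
qed

theorem lemma2p6:
  fixes g n l m :: nat and t :: "nat \<Rightarrow> mat3" and A :: "gen set"
    and i j k u v w :: 3
  assumes "g \<ge> 2" and "n \<ge> 2"
    and "generic n t"
    and "l \<in> {1..n}" and "m \<in> {1..n}" and "l \<noteq> m"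
    and "A \<subseteq> GA ` {1..g} \<union> GB ` {1..g} \<union> GC ` ({1..n} - {l, m})"
    and "distinct [i, j, k]" and "distinct [u, v, w]"
  shows "{Q \<in> S g n t. (\<forall>x\<in>A. vanish_entry g n t l i j x Q \<and> vanish_entry g n t l i k x Q)
              \<and> vanish_eig g n t l u j m Q \<and> vanish_eig g n t l u k m Q}
       = {Q \<in> S g n t. (\<forall>x\<in>A. vanish_entry g n t m u v x Q \<and> vanish_entry g n t m u w x Q)
              \<and> vanish_eig g n t m i v l Q \<and> vanish_eig g n t m i w l Q}"
proof -
  have "i \<noteq> j" "i \<noteq> k" "u \<noteq> v" "u \<noteq> w" using assms(8,9) by auto
  then show ?thesis
    using main_dir[OF assms(3) assms(4) assms(5) assms(8), where u=u and v=v and w=w and A=A and g=g]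
      main_dir[OF assms(3) assms(5) assms(4) assms(9), where u=i and v=j and w=k and A=A and g=g]
    by blast
qed

end
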